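(* Let $n$ be an odd positive integer. Then for every integer $\ell\ge 2$, \[\max(n,\ell)=\binom{n}{2}-\left\lfloor\frac{n}{2}\right\rfloor.\] Moreover, $\overline{M_n}$ is (up to isomorphism) the unique $N$-AW graph of maximum size on $n$ vertices.
   Context: All graphs are finite and simple; $\overline{G}$ is the complement of $G$. Vertex labels lie in $\mathbb{Z}_\ell$. In the neighborhood Lights Out game on $G$, toggling a vertex $v$ adds $1$ (mod $\ell$) to the label of each vertex of the closed neighborhood $N[v]$; the game is won when all labels are $0$. $G$ is $N$-AW if the game can be won from every initial labeling $V(G)\to\mathbb{Z}_\ell$. $\max(n,\ell)$ is the maximum number of edges of an $N$-AW graph on $n$ vertices. For odd $n$, $M_n$ denotes a near-perfect matching on $n$ vertices: $(n-1)/2$ disjoint edges together with one isolated vertex. *)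

theory Defs
  imports Main
begin

definition simple_graph :: "'a set \<Rightarrow> ('a \<Rightarrow> 'a \<Rightarrow> bool) \<Rightarrow> bool" where
  "simple_graph V E \<longleftrightarrow> finite V \<and> (\<forall>x y. E x y \<longrightarrow> x \<in> V \<and> y \<in> V)
     \<and> (\<forall>x y. E x y \<longrightarrow> E y x) \<and> (\<forall>x. \<not> E x x)"

definition edge_set :: "'a set \<Rightarrow> ('a \<Rightarrow> 'a \<Rightarrow> bool) \<Rightarrow> 'a set set" where
  "edge_set V E = {{x, y} | x y. x \<in> V \<and> y \<in> V \<and> E x y}"

definition num_edges :: "'a set \<Rightarrow> ('a \<Rightarrow> 'a \<Rightarrow> bool) \<Rightarrow> nat" where
  "num_edges V E = card (edge_set V E)"

definition closed_nbhd :: "'a set \<Rightarrow> ('a \<Rightarrow> 'a \<Rightarrow> bool) \<Rightarrow> 'a \<Rightarrow> 'a set" where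
  "closed_nbhd V E v = insert v {u \<in> V. E v u}"

text \<open>Neighbourhood Lights Out over Z_l: toggling v (t v times) adds t v to every
  label in N[v]; the game is won from labeling c if some toggle counts make all
  labels 0 mod l.\<close>
definition N_AW :: "'a set \<Rightarrow> ('a \<Rightarrow> 'a \<Rightarrow> bool) \<Rightarrow> nat \<Rightarrow> bool" where
  "N_AW V E l \<longleftrightarrow>
     (\<forall>c :: 'a \<Rightarrow> int. \<exists>t :: 'a \<Rightarrow> nat. \<forall>u \<in> V.
        (c u + int (\<Sum>v \<in> {v \<in> V. u \<in> closed_nbhd V E v}. t v)) mod int l = 0)"

definition maxAW :: "nat \<Rightarrow> nat \<Rightarrow> nat" where
  "maxAW n l = Max {num_edges {0..<n} E | E. simple_graph {0..<n} E \<and> N_AW {0..<n} E l}"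

text \<open>Near-perfect matching M_n on {0..<n} (n odd): edges {2i,2i+1}, vertex n-1 isolated.\<close>
definition near_perfect_matching :: "nat \<Rightarrow> nat \<Rightarrow> nat \<Rightarrow> bool" where
  "near_perfect_matching n x y \<longleftrightarrow> x < n \<and> y < n \<and> x \<noteq> y \<and> x div 2 = y div 2"

definition complement :: "'a set \<Rightarrow> ('a \<Rightarrow> 'a \<Rightarrow> bool) \<Rightarrow> 'a \<Rightarrow> 'a \<Rightarrow> bool" where
  "complement V E x y \<longleftrightarrow> x \<in> V \<and> y \<in> V \<and> x \<noteq> y \<and> \<not> E x y"

definition graph_iso :: "'a set \<Rightarrow> ('a \<Rightarrow> 'a \<Rightarrow> bool) \<Rightarrow> 'b set \<Rightarrow> ('b \<Rightarrow> 'b \<Rightarrow> bool) \<Rightarrow> bool" where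
  "graph_iso V E W F \<longleftrightarrow> (\<exists>f. bij_betw f V W \<and> (\<forall>x \<in> V. \<forall>y \<in> V. E x y \<longleftrightarrow> F (f x) (f y)))"

end

theory Submission
  imports Defs
begin


lemma edge_set_compl_mem:
  assumes "simple_graph V E"
  shows "e \<in> edge_set V (complement V E) \<longleftrightarrow> (\<exists>x y. e = {x,y} \<and> x \<in> V \<and> y \<in> V \<and> x \<noteq> y \<and> \<not> E x y)"
  unfolding edge_set_def complement_def by auto

lemma compl_edge_iff:
  assumes "simple_graph V E" "x \<in> V" "y \<in> V" "x \<noteq> y"
  shows "{x,y} \<in> edge_set V (complement V E) \<longleftrightarrow> \<not> E x y"
proof
  assume "{x,y} \<in> edge_set V (complement V E)"
  then obtain a b where "{x,y} = {a,b}" "\<not> E a b" unfolding edge_set_def complement_def by auto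
  then show "\<not> E x y" using assms(1) unfolding simple_graph_def doubleton_eq_iff by blast
next
  assume "\<not> E x y" then show "{x,y} \<in> edge_set V (complement V E)"
    using assms unfolding edge_set_def complement_def by blast
qed

lemma num_edges_compl:
  assumes G: "simple_graph V E"
  shows "num_edges V E = (card V choose 2) - card (edge_set V (complement V E))"
proof -
  have fin: "finite V" using G by (simp add: simple_graph_def)
  let ?A = "edge_set V E" let ?B = "edge_set V (complement V E)"
  have un: "?A \<union> ?B = {B. B \<subseteq> V \<and> card B = 2}"
  proof (intro equalityI subsetI)
    fix e assume "e \<in> ?A \<union> ?B"
    then obtain x y where "e = {x,y}" "x \<in> V" "y \<in> V" "x \<noteq> y"
      using G unfolding edge_set_def complement_def simple_graph_def by blast
    then show "e \<in> {B. B \<subseteq> V \<and> card B = 2}" by auto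
  next
    fix e assume "e \<in> {B. B \<subseteq> V \<and> card B = 2}"
    then obtain x y where e: "e = {x,y}" "x \<noteq> y" "x \<in> V" "y \<in> V" by (auto simp: card_2_iff)
    show "e \<in> ?A \<union> ?B"
    proof (cases "E x y")
      case True then show ?thesis using e unfolding edge_set_def by blast
    next
      case False then show ?thesis using e compl_edge_iff[OF G] by blast
    qed
  qed
  have dis: "?A \<inter> ?B = {}"
  proof -
    { fix e assume "e \<in> ?A" "e \<in> ?B"
      then obtain x y where "e = {x,y}" "E x y" "x \<in> V" "y \<in> V" unfolding edge_set_def by blast
      moreover have "x \<noteq> y" using G \<open>E x y\<close> unfolding simple_graph_def by auto
      ultimately have False using compl_edge_iff[OF G, of x y] \<open>e \<in> ?B\<close> by simp }
    then show ?thesis by blast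
  qed
  have finAB: "finite ?A" "finite ?B"
  proof -
    have "finite {B. B \<subseteq> V \<and> card B = 2}"
      by (rule finite_subset[of _ "Pow V"]) (use fin in auto)
    then show "finite ?A" "finite ?B" using un by (metis finite_Un)+
  qed
  have "card ?A + card ?B = card V choose 2"
    using card_Un_disjoint[OF finAB dis] un n_subsets[OF fin, of 2] by simp
  then show ?thesis unfolding num_edges_def by simp
qed

lemma same_col_not_AW:
  assumes "N_AW V E l" "l \<ge> 2" "x \<in> V" "y \<in> V" "x \<noteq> y"
    "{v\<in>V. x \<in> closed_nbhd V E v} = {v\<in>V. y \<in> closed_nbhd V E v}"
  shows False
proof -
  from assms(1)[unfolded N_AW_def, rule_format, of "\<lambda>u. if u = x then 1 else 0"]
  obtain t where t: "\<forall>u\<in>V. ((\<lambda>u. if u = x then 1 else 0) u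
     + int (\<Sum>v \<in> {v \<in> V. u \<in> closed_nbhd V E v}. t v)) mod int l = 0"
    by auto
  define s where "s = int (\<Sum>v \<in> {v \<in> V. x \<in> closed_nbhd V E v}. t v)"
  have tx: "((if x = x then 1 else 0) + s) mod int l = 0" using t[rule_format, OF assms(3)] unfolding s_def .
  have ty: "((if y = x then 1 else 0) + int (\<Sum>v \<in> {v \<in> V. y \<in> closed_nbhd V E v}. t v)) mod int l = 0"
    using t[rule_format, OF assms(4)] .
  have "int l dvd 1 + s" using tx by (simp add: mod_eq_0_iff_dvd)
  moreover have "int l dvd s" using ty assms(5,6) unfolding s_def by (simp add: mod_eq_0_iff_dvd)
  ultimately have "int l dvd (1 + s) - s" by (rule dvd_diff)
  then have "int l dvd 1" by simp
  then show False using assms(2) by simp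
qed

lemma universal_col:
  assumes G: "simple_graph V E" "x \<in> V" "\<forall>v\<in>V. v \<noteq> x \<longrightarrow> E x v"
  shows "{v\<in>V. x \<in> closed_nbhd V E v} = V"
  using assms unfolding closed_nbhd_def simple_graph_def by auto

lemma cover_bound:
  assumes G: "simple_graph V E" and AW: "N_AW V E l" and l: "l \<ge> 2"
  shows "card V \<le> card (\<Union>(edge_set V (complement V E))) + 1"
    and "\<Union>(edge_set V (complement V E)) \<subseteq> V"
proof -
  let ?C = "edge_set V (complement V E)"
  have fin: "finite V" using G by (simp add: simple_graph_def)
  show sub: "\<Union>?C \<subseteq> V" unfolding edge_set_def complement_def by auto
  have univ: "\<forall>v\<in>V. v \<noteq> x \<longrightarrow> E x v" if "x \<in> V - \<Union>?C" for x
  proof (intro ballI impI)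
    fix v assume "v \<in> V" "v \<noteq> x"
    show "E x v"
    proof (rule ccontr)
      assume "\<not> E x v"
      then have "{x,v} \<in> ?C" using compl_edge_iff[OF G, of x v] that \<open>v \<in> V\<close> \<open>v \<noteq> x\<close> by auto
      then show False using that by blast
    qed
  qed
  have "card (V - \<Union>?C) \<le> Suc 0"
  proof (subst card_le_Suc0_iff_eq, use fin in simp, intro ballI, rule ccontr)
    fix a b assume ab: "a \<in> V - \<Union>?C" "b \<in> V - \<Union>?C" "a \<noteq> b"
    show False
      using same_col_not_AW[OF AW l, of a b] ab universal_col[OF G _ univ] by auto
  qed
  moreover have "card V = card (\<Union>?C) + card (V - \<Union>?C)"
    using card_Diff_subset[OF finite_subset[OF sub fin] sub] card_mono[OF fin sub] by simp
  ultimately show "card V \<le> card (\<Union>?C) + 1" by simp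
qed



lemma card_Union_overlap:
  assumes "finite C" "\<forall>e\<in>C. finite e" "e1 \<in> C" "e2 \<in> C" "e1 \<noteq> e2" "e1 \<inter> e2 \<noteq> {}"
  shows "card (\<Union>C) < sum card C"
proof -
  let ?R = "C - {e1,e2}"
  have fe: "finite e1" "finite e2" using assms by auto
  have "\<Union>C = (e1 \<union> e2) \<union> \<Union>?R" using assms by blast
  then have "card (\<Union>C) \<le> card (e1 \<union> e2) + card (\<Union>?R)" by (metis card_Un_le)
  moreover have "card (\<Union>?R) \<le> sum card ?R" by (rule card_Union_le_sum_card)
  moreover have "card (e1 \<union> e2) < card e1 + card e2"
  proof -
    have "card (e1 \<inter> e2) > 0" using assms(6) fe by (simp add: card_gt_0_iff)
    then show ?thesis using card_Un_Int[OF fe] by simp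
  qed
  moreover have "sum card C = card e1 + card e2 + sum card ?R"
  proof -
    have "sum card C = card e1 + sum card (C - {e1})" using assms by (simp add: sum.remove)
    moreover have "sum card (C - {e1}) = card e2 + sum card (C - {e1} - {e2})"
      using assms by (intro sum.remove) auto
    moreover have "C - {e1} - {e2} = ?R" by blast
    ultimately show ?thesis by simp
  qed
  ultimately show ?thesis by linarith
qed

lemma AW_from_int:
  assumes "\<forall>c::'a\<Rightarrow>int. \<exists>T::'a\<Rightarrow>int. \<forall>u\<in>V. c u + (\<Sum>v\<in>{v\<in>V. u \<in> closed_nbhd V E v}. T v) = 0"
    and "l \<ge> 1"
  shows "N_AW V E l"
  unfolding N_AW_def
proof
  fix c :: "'a \<Rightarrow> int"
  obtain T where T: "\<forall>u\<in>V. c u + (\<Sum>v\<in>{v\<in>V. u \<in> closed_nbhd V E v}. T v) = 0"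
    using assms(1) by blast
  define t where "t v = nat (T v mod int l)" for v
  show "\<exists>t::'a\<Rightarrow>nat. \<forall>u\<in>V. (c u + int (\<Sum>v\<in>{v\<in>V. u \<in> closed_nbhd V E v}. t v)) mod int l = 0"
  proof (intro exI ballI)
    fix u assume u: "u \<in> V"
    let ?S = "{v\<in>V. u \<in> closed_nbhd V E v}"
    have "int (\<Sum>v\<in>?S. t v) = (\<Sum>v\<in>?S. T v mod int l)"
      unfolding t_def of_nat_sum using assms(2) by (intro sum.cong) auto
    then have "(c u + int (\<Sum>v\<in>?S. t v)) mod int l = (c u + (\<Sum>v\<in>?S. T v mod int l) mod int l) mod int l"
      by (simp add: mod_add_right_eq)
    also have "\<dots> = (c u + (\<Sum>v\<in>?S. T v) mod int l) mod int l" by (simp add: mod_sum_eq)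
    also have "\<dots> = (c u + (\<Sum>v\<in>?S. T v)) mod int l" by (simp add: mod_add_right_eq)
    also have "\<dots> = 0" using T u by simp
    finally show "(c u + int (\<Sum>v\<in>?S. t v)) mod int l = 0" .
  qed
qed

definition partner :: "nat \<Rightarrow> nat" where "partner u = (if even u then u + 1 else u - 1)"

lemma P_char: "u < 2*m \<Longrightarrow> v < 2*m+1 \<Longrightarrow> (v div 2 = u div 2 \<and> v \<noteq> u) \<longleftrightarrow> v = partner u"
  unfolding partner_def by (cases "even u") (auto, presburger+)

lemma P_last: "(v::nat) < 2*m+1 \<Longrightarrow> v div 2 = (2*m) div 2 \<Longrightarrow> v = 2*m"
  by presburger

lemma P_props: assumes "u < 2*m" shows "partner u < 2*m \<and> partner (partner u) = u"
proof (cases "even u")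
  case True
  then have "partner u = u+1" by (simp add: partner_def)
  moreover have "u+1 < 2*m" using True assms by presburger
  moreover have "partner (u+1) = u" using True by (simp add: partner_def)
  ultimately show ?thesis by simp
next
  case False
  then have "partner u = u-1" by (simp add: partner_def)
  moreover have "u \<ge> 1" "even (u-1)" using False by presburger+
  moreover have "partner (u-1) = u" using calculation by (simp add: partner_def)
  ultimately show ?thesis using assms by simp
qed

lemma col_M:
  assumes "u < 2*m+1"
  shows "{v\<in>{0..<2*m+1}. u \<in> closed_nbhd {0..<2*m+1} (complement {0..<2*m+1} (near_perfect_matching (2*m+1))) v}
     = (if u = 2*m then {0..<2*m+1} else {0..<2*m+1} - {partner u})"
proof -
  have key: "u \<in> closed_nbhd {0..<2*m+1} (complement {0..<2*m+1} (near_perfect_matching (2*m+1))) v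
     \<longleftrightarrow> (v = u \<or> v div 2 \<noteq> u div 2)" if "v < 2*m+1" for v
    using that assms unfolding closed_nbhd_def complement_def near_perfect_matching_def by auto
  show ?thesis
  proof (cases "u = 2*m")
    case True
    then show ?thesis using key P_last by auto
  next
    case False
    then have "u < 2*m" using assms by simp
    show ?thesis
    proof (intro set_eqI iffI)
      fix v assume "v \<in> {v\<in>{0..<2*m+1}. u \<in> closed_nbhd {0..<2*m+1} (complement {0..<2*m+1} (near_perfect_matching (2*m+1))) v}"
      then show "v \<in> (if u = 2*m then {0..<2*m+1} else {0..<2*m+1} - {partner u})"
        using key[of v] P_char[OF \<open>u < 2*m\<close>, of v] False by auto
    next
      fix v assume "v \<in> (if u = 2*m then {0..<2*m+1} else {0..<2*m+1} - {partner u})"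
      then show "v \<in> {v\<in>{0..<2*m+1}. u \<in> closed_nbhd {0..<2*m+1} (complement {0..<2*m+1} (near_perfect_matching (2*m+1))) v}"
        using key[of v] P_char[OF \<open>u < 2*m\<close>, of v] False by auto
    qed
  qed
qed

lemma sum_P: "(\<Sum>v\<in>{0..<2*m}. (b (partner v)::int)) = (\<Sum>v\<in>{0..<2*m}. b v)"
  by (rule sum.reindex_bij_witness[of _ partner partner]) (auto simp: P_props)

lemma M_AW:
  assumes "l \<ge> 1"
  shows "N_AW {0..<2*m+1} (complement {0..<2*m+1} (near_perfect_matching (2*m+1))) l"
proof (rule AW_from_int[OF _ assms], intro allI)
  fix c :: "nat \<Rightarrow> int"
  define b where "b v = - c v" for v
  define T where "T v = (if v = 2*m then b (2*m) - int (2*m) * b (2*m) + (\<Sum>u\<in>{0..<2*m}. b u)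
     else b (2*m) - b (partner v))" for v
  have S: "(\<Sum>v\<in>{0..<2*m+1}. T v) = b (2*m)"
  proof -
    have "(\<Sum>v\<in>{0..<2*m+1}. T v) = (\<Sum>v\<in>{0..<2*m}. T v) + T (2*m)"
      by simp
    also have "(\<Sum>v\<in>{0..<2*m}. T v) = (\<Sum>v\<in>{0..<2*m}. b (2*m) - b (partner v))"
      unfolding T_def by (intro sum.cong) auto
    also have "\<dots> = int (2*m) * b (2*m) - (\<Sum>v\<in>{0..<2*m}. b v)"
      by (simp add: sum_subtractf sum_P)
    finally show ?thesis unfolding T_def by simp
  qed
  show "\<exists>T. \<forall>u\<in>{0..<2*m+1}. c u + (\<Sum>v\<in>{v\<in>{0..<2*m+1}. u \<in> closed_nbhd {0..<2*m+1} (complement {0..<2*m+1} (near_perfect_matching (2*m+1))) v}. T v) = 0"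
  proof (intro exI ballI)
    fix u assume u: "u \<in> {0..<2*m+1}"
    show "c u + (\<Sum>v\<in>{v\<in>{0..<2*m+1}. u \<in> closed_nbhd {0..<2*m+1} (complement {0..<2*m+1} (near_perfect_matching (2*m+1))) v}. T v) = 0"
    proof (cases "u = 2*m")
      case True
      then show ?thesis using col_M[of u m] u S unfolding b_def by simp
    next
      case False
      then have u2: "u < 2*m" using u by simp
      have "(\<Sum>v\<in>{0..<2*m+1} - {partner u}. T v) = b (2*m) - T (partner u)"
        using S P_props[OF u2] by (simp add: sum_diff1)
      also have "\<dots> = b u" unfolding T_def using P_props[OF u2] by auto
      finally show ?thesis using col_M[of u m] u False unfolding b_def by simp
    qed
  qed
qed



lemma matching_iso:
  fixes V :: "'a set" and m :: nat
  assumes G: "simple_graph V E" and cV: "card V = 2*m+1"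
    and cC: "card (edge_set V (complement V E)) = m"
    and disj: "\<forall>e1\<in>edge_set V (complement V E). \<forall>e2\<in>edge_set V (complement V E). e1 \<noteq> e2 \<longrightarrow> e1 \<inter> e2 = {}"
    and w: "w \<in> V" "\<forall>e\<in>edge_set V (complement V E). w \<notin> e"
  shows "graph_iso V E {0..<2*m+1} (complement {0..<2*m+1} (near_perfect_matching (2*m+1)))"
proof -
  let ?C = "edge_set V (complement V E)"
  let ?N = "{0..<2*m+1}"
  have finV: "finite V" using G by (simp add: simple_graph_def)
  have "?C \<subseteq> Pow V" unfolding edge_set_def complement_def by auto
  then have finC: "finite ?C" using finV by (meson finite_Pow_iff finite_subset)
  obtain g where g: "bij_betw g {0..<m} ?C" using ex_bij_betw_nat_finite[OF finC] cC by auto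
  have "\<forall>i\<in>{0..<m}. \<exists>p. g i = {fst p, snd p} \<and> fst p \<noteq> snd p \<and> fst p \<in> V \<and> snd p \<in> V"
  proof
    fix i assume "i \<in> {0..<m}"
    then have "g i \<in> ?C" using g by (auto simp: bij_betw_def)
    then obtain x y where "g i = {x,y}" "x \<in> V" "y \<in> V" "x \<noteq> y"
      using edge_set_compl_mem[OF G] by blast
    then show "\<exists>p. g i = {fst p, snd p} \<and> fst p \<noteq> snd p \<and> fst p \<in> V \<and> snd p \<in> V"
      by (intro exI[of _ "(x,y)"]) auto
  qed
  then obtain p where p: "\<forall>i\<in>{0..<m}. g i = {fst (p i), snd (p i)} \<and> fst (p i) \<noteq> snd (p i)
      \<and> fst (p i) \<in> V \<and> snd (p i) \<in> V"
    by (rule bchoice[THEN exE]) blast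
  define h where "h k = (if k = 2*m then w else if even k then fst (p (k div 2)) else snd (p (k div 2)))" for k
  have gC: "g i \<in> ?C" if "i < m" for i using g that by (auto simp: bij_betw_def)
  have ginj: "g i = g j \<Longrightarrow> i < m \<Longrightarrow> j < m \<Longrightarrow> i = j" for i j
    using g by (auto simp: bij_betw_def inj_on_def)
  have hg: "h k \<in> g (k div 2)" if "k < 2*m" for k
  proof -
    have "k div 2 < m" using that by simp
    then show ?thesis using p that unfolding h_def by auto
  qed
  have hV: "h k \<in> V" if "k < 2*m+1" for k
  proof (cases "k = 2*m")
    case True then show ?thesis using w unfolding h_def by simp
  next
    case False
    then have "k div 2 < m" using that by simp
    then show ?thesis using p unfolding h_def by auto
  qed
  have hw: "h k \<noteq> w" if "k < 2*m" for k
    using hg[OF that] w(2) gC[of "k div 2"] that by auto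
  have pair: "{h k, h k'} = g (k div 2)" if "k < 2*m" "k' < 2*m" "k \<noteq> k'" "k div 2 = k' div 2" for k k'
  proof -
    have "k div 2 < m" using that by simp
    moreover have "(even k \<and> odd k') \<or> (odd k \<and> even k')" using that by presburger
    ultimately show ?thesis using p that unfolding h_def by auto
  qed
  have inj: "inj_on h ?N"
  proof (rule inj_onI)
    fix k k' assume k: "k \<in> ?N" "k' \<in> ?N" "h k = h k'"
    show "k = k'"
    proof (rule ccontr)
      assume ne: "k \<noteq> k'"
      show False
      proof (cases "k = 2*m \<or> k' = 2*m")
        case True
        then show False
        proof
          assume a: "k = 2*m"
          then have "k' < 2*m" using k ne by auto
          moreover have "h k = w" using a by (simp add: h_def)
          ultimately show False using hw k(3) by metis
        next
          assume a: "k' = 2*m"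
          then have "k < 2*m" using k ne by auto
          moreover have "h k' = w" using a by (simp add: h_def)
          ultimately show False using hw k(3) by metis
        qed
      next
        case False
        then have lt: "k < 2*m" "k' < 2*m" using k by auto
        show False
        proof (cases "k div 2 = k' div 2")
          case True
          have "card {h k, h k'} = 2"
          proof -
            have "g (k div 2) \<in> ?C" using gC lt by simp
            then obtain x y where "g (k div 2) = {x,y}" "x \<noteq> y"
              using edge_set_compl_mem[OF G] by blast
            then show ?thesis using pair[OF lt ne True] by simp
          qed
          moreover have "{h k, h k'} = {h k}" using k(3) by simp
          ultimately show False by simp
        next
          case False
          have "g (k div 2) \<noteq> g (k' div 2)" proof
            assume "g (k div 2) = g (k' div 2)"
            moreover have "k div 2 < m" "k' div 2 < m" using lt by auto
            ultimately show False using ginj False by blast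
          qed
          moreover have "g (k div 2) \<in> ?C" "g (k' div 2) \<in> ?C" using gC lt by auto
          ultimately have "g (k div 2) \<inter> g (k' div 2) = {}" using disj by blast
          moreover have "h k \<in> g (k div 2)" "h k' \<in> g (k' div 2)" using hg lt by auto
          ultimately show False using k(3) by auto
        qed
      qed
    qed
  qed
  have img: "h ` ?N = V"
  proof (rule card_subset_eq[OF finV])
    show "h ` ?N \<subseteq> V" using hV by auto
    show "card (h ` ?N) = card V" using card_image[OF inj] cV by simp
  qed
  have bij: "bij_betw h ?N V" using inj img by (simp add: bij_betw_def)
  define f where "f = inv_into ?N h"
  have fbij: "bij_betw f V ?N" unfolding f_def by (rule bij_betw_inv_into[OF bij])
  have key: "E (h k) (h k') \<longleftrightarrow> complement ?N (near_perfect_matching (2*m+1)) k k'"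
    if k: "k < 2*m+1" "k' < 2*m+1" for k k'
  proof (cases "k = k'")
    case True
    then show ?thesis using G unfolding simple_graph_def complement_def by auto
  next
    case ne: False
    have hne: "h k \<noteq> h k'" using inj k ne by (auto simp: inj_on_def)
    have R: "complement ?N (near_perfect_matching (2*m+1)) k k' \<longleftrightarrow> k div 2 \<noteq> k' div 2"
      using k ne unfolding complement_def near_perfect_matching_def by auto
    have L: "E (h k) (h k') \<longleftrightarrow> {h k, h k'} \<notin> ?C"
      using compl_edge_iff[OF G hV[OF k(1)] hV[OF k(2)] hne] by simp
    have "{h k, h k'} \<in> ?C \<longleftrightarrow> k div 2 = k' div 2"
    proof
      assume e: "{h k, h k'} \<in> ?C"
      have "k \<noteq> 2*m"
      proof
        assume "k = 2*m" then have "h k = w" by (simp add: h_def)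
        then show False using e w(2) by blast
      qed
      moreover have "k' \<noteq> 2*m"
      proof
        assume "k' = 2*m" then have "h k' = w" by (simp add: h_def)
        then show False using e w(2) by blast
      qed
      ultimately have lt: "k < 2*m" "k' < 2*m" using k by auto
      obtain j where j: "j < m" "g j = {h k, h k'}" proof -
        have "{h k, h k'} \<in> g ` {0..<m}" using g e by (simp add: bij_betw_def)
        then show ?thesis using that by (metis atLeastLessThan_iff imageE)
      qed
      have same: "g (q div 2) = g j" if "q < 2*m" "h q \<in> g j" for q
      proof (rule ccontr)
        assume a: "g (q div 2) \<noteq> g j"
        have "q div 2 < m" using that by simp
        then have "g (q div 2) \<inter> g j = {}" using disj gC[of "q div 2"] gC[OF j(1)] a by simp
        moreover have "h q \<in> g (q div 2)" using hg that by simp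
        ultimately show False using that by blast
      qed
      have "g (k div 2) = g j" using same[OF lt(1)] j by simp
      moreover have "g (k' div 2) = g j" using same[OF lt(2)] j by simp
      moreover have "k div 2 < m" "k' div 2 < m" using lt by auto
      ultimately show "k div 2 = k' div 2" using ginj by metis
    next
      assume d: "k div 2 = k' div 2"
      have "k \<noteq> 2*m"
      proof
        assume "k = 2*m"
        then have "k' div 2 = m" using d by simp
        then have "k' = 2*m" using k by linarith
        then show False using ne \<open>k = 2*m\<close> by simp
      qed
      moreover have "k' \<noteq> 2*m"
      proof
        assume "k' = 2*m"
        then have "k div 2 = m" using d by simp
        then have "k = 2*m" using k by linarith
        then show False using ne \<open>k' = 2*m\<close> by simp
      qed
      ultimately have lt: "k < 2*m" "k' < 2*m" using k by auto
      show "{h k, h k'} \<in> ?C" using pair[OF lt ne d] gC lt by simp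
    qed
    then show ?thesis using L R by simp
  qed
  show ?thesis unfolding graph_iso_def
  proof (intro exI conjI ballI)
    show "bij_betw f V ?N" by (rule fbij)
    fix x y assume xy: "x \<in> V" "y \<in> V"
    obtain k where k: "k \<in> ?N" "x = h k" using img xy by blast
    obtain k' where k': "k' \<in> ?N" "y = h k'" using img xy by blast
    have "f x = k" "f y = k'" unfolding f_def using k k' inv_into_f_f[OF inj] by auto
    then show "E x y \<longleftrightarrow> complement ?N (near_perfect_matching (2*m+1)) (f x) (f y)"
      using key k k' by auto
  qed
qed



lemma bound_and_iso:
  fixes V :: "'a set"
  assumes G: "simple_graph V E" and cV: "card V = 2*m+1" and AW: "N_AW V E l" and l: "l \<ge> 2"
  shows "num_edges V E \<le> ((2*m+1) choose 2) - m"
    and "num_edges V E = ((2*m+1) choose 2) - m \<Longrightarrow>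
         graph_iso V E {0..<2*m+1} (complement {0..<2*m+1} (near_perfect_matching (2*m+1)))"
proof -
  let ?C = "edge_set V (complement V E)"
  have finV: "finite V" using G by (simp add: simple_graph_def)
  have sub2: "?C \<subseteq> {B. B \<subseteq> V \<and> card B = 2}"
  proof
    fix e assume "e \<in> ?C"
    then obtain x y where "e = {x,y}" "x \<in> V" "y \<in> V" "x \<noteq> y"
      using edge_set_compl_mem[OF G] by blast
    then show "e \<in> {B. B \<subseteq> V \<and> card B = 2}" by auto
  qed
  have fin2: "finite {B. B \<subseteq> V \<and> card B = 2}"
    by (rule finite_subset[of _ "Pow V"]) (use finV in auto)
  have finC: "finite ?C" using finite_subset[OF sub2 fin2] .
  have cC_le: "card ?C \<le> (2*m+1) choose 2"
    using card_mono[OF fin2 sub2] n_subsets[OF finV, of 2] cV by simp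
  have c2: "card e = 2" if "e \<in> ?C" for e using sub2 that by auto
  have sumC: "sum card ?C = 2 * card ?C"
    using sum.cong[OF refl c2, of ?C] by simp
  have U: "card (\<Union>?C) \<le> 2 * card ?C" using card_Union_le_sum_card[of ?C] sumC by simp
  have cov: "card V \<le> card (\<Union>?C) + 1" and subV: "\<Union>?C \<subseteq> V"
    using cover_bound[OF G AW l] by auto
  have mC: "m \<le> card ?C" using U cov cV by simp
  have ne: "num_edges V E = ((2*m+1) choose 2) - card ?C" using num_edges_compl[OF G] cV by simp
  then show "num_edges V E \<le> ((2*m+1) choose 2) - m" using mC by simp
  assume eq: "num_edges V E = ((2*m+1) choose 2) - m"
  have cCm: "card ?C = m" using eq ne mC cC_le by simp
  have cU: "card (\<Union>?C) = 2*m" using U cov cV cCm by simp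
  have disj: "\<forall>e1\<in>?C. \<forall>e2\<in>?C. e1 \<noteq> e2 \<longrightarrow> e1 \<inter> e2 = {}"
  proof (intro ballI impI, rule ccontr)
    fix e1 e2 assume "e1 \<in> ?C" "e2 \<in> ?C" "e1 \<noteq> e2" "e1 \<inter> e2 \<noteq> {}"
    moreover have "\<forall>e\<in>?C. finite e" using c2 card_ge_0_finite by force
    ultimately have "card (\<Union>?C) < sum card ?C" using card_Union_overlap[OF finC] by blast
    then show False using cU sumC cCm by simp
  qed
  have "card (V - \<Union>?C) = 1"
    using card_Diff_subset[OF finite_subset[OF subV finV] subV] cV cU by simp
  then obtain w where w: "V - \<Union>?C = {w}" by (rule card_1_singletonE)
  then have "w \<in> V" "\<forall>e\<in>?C. w \<notin> e" by auto
  then show "graph_iso V E {0..<2*m+1} (complement {0..<2*m+1} (near_perfect_matching (2*m+1)))"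
    using matching_iso[OF G cV cCm disj] by blast
qed

lemma M_simple: "simple_graph {0..<n} (complement {0..<n} (near_perfect_matching n))"
  unfolding simple_graph_def complement_def near_perfect_matching_def by auto

lemma M_edges: "num_edges {0..<2*m+1} (complement {0..<2*m+1} (near_perfect_matching (2*m+1)))
   = ((2*m+1) choose 2) - m"
proof -
  let ?V = "{0..<2*m+1}"
  have cc: "complement ?V (complement ?V (near_perfect_matching (2*m+1))) = near_perfect_matching (2*m+1)"
    unfolding complement_def near_perfect_matching_def by (intro ext) auto
  have es: "edge_set ?V (near_perfect_matching (2*m+1)) = (\<lambda>i. {2*i, 2*i+1}) ` {0..<m}"
  proof (intro set_eqI iffI)
    fix e assume "e \<in> edge_set ?V (near_perfect_matching (2*m+1))"
    then obtain x y where xy: "e = {x,y}" "x < 2*m+1" "y < 2*m+1" "x \<noteq> y" "x div 2 = y div 2"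
      unfolding edge_set_def near_perfect_matching_def by auto
    have "x div 2 < m" using xy(2-5) by presburger
    moreover have "(x = 2*(x div 2) \<and> y = 2*(x div 2)+1) \<or> (x = 2*(x div 2)+1 \<and> y = 2*(x div 2))"
      using xy(4,5) by presburger
    then have "{x,y} = {2*(x div 2), 2*(x div 2)+1}" by auto
    ultimately show "e \<in> (\<lambda>i. {2*i, 2*i+1}) ` {0..<m}" using xy(1) by auto
  next
    fix e assume "e \<in> (\<lambda>i. {2*i, 2*i+1}) ` {0..<m}"
    then obtain i where "i < m" "e = {2*i, 2*i+1}" by auto
    then show "e \<in> edge_set ?V (near_perfect_matching (2*m+1))"
      unfolding edge_set_def near_perfect_matching_def by fastforce
  qed
  have inj: "inj_on (\<lambda>i::nat. {2*i, 2*i+1}) {0..<m}"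
  proof (rule inj_onI)
    fix i j :: nat assume "{2*i, 2*i+1} = {2*j, 2*j+1}"
    then have "2*i \<in> {2*j, 2*j+1}" by blast
    then show "i = j" by auto
  qed
  show ?thesis
    using num_edges_compl[OF M_simple] cc es card_image[OF inj] by simp
qed

theorem proposition4p2:
  fixes n l :: nat
  assumes "odd n" and "n > 0" and "l \<ge> 2"
  shows "maxAW n l = (n choose 2) - n div 2
    \<and> simple_graph {0..<n} (complement {0..<n} (near_perfect_matching n))
    \<and> N_AW {0..<n} (complement {0..<n} (near_perfect_matching n)) l
    \<and> num_edges {0..<n} (complement {0..<n} (near_perfect_matching n)) = maxAW n l
    \<and> (\<forall>(V :: 'a set) E. simple_graph V E \<and> card V = n \<and> N_AW V E l
          \<and> num_edges V E = maxAW n l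
          \<longrightarrow> graph_iso V E {0..<n} (complement {0..<n} (near_perfect_matching n)))"
proof -
  obtain m where n: "n = 2*m+1" using assms(1) oddE by blast
  have nd: "n div 2 = m" using n by simp
  let ?F = "complement {0..<n} (near_perfect_matching n)"
  let ?S = "{num_edges {0..<n} E | E. simple_graph {0..<n} E \<and> N_AW {0..<n} E l}"
  have AWF: "N_AW {0..<n} ?F l" using M_AW[of l m] assms(3) n by simp
  have eF: "num_edges {0..<n} ?F = (n choose 2) - m" using M_edges[of m] n by simp
  have inS: "(n choose 2) - m \<in> ?S" using M_simple AWF eF by (metis (mono_tags, lifting) mem_Collect_eq)
  have le: "x \<le> (n choose 2) - m" if "x \<in> ?S" for x
  proof -
    obtain E where E: "x = num_edges {0..<n} E" "simple_graph {0..<n} E" "N_AW {0..<n} E l"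
      using \<open>x \<in> ?S\<close> by blast
    show ?thesis using bound_and_iso(1)[OF E(2) _ E(3) assms(3), of m] E(1) n by simp
  qed
  have finS: "finite ?S" by (rule finite_subset[of _ "{..(n choose 2) - m}"]) (use le in auto)
  have mx: "maxAW n l = (n choose 2) - m"
    unfolding maxAW_def by (rule Max_eqI[OF finS le inS])
  have uniq: "\<forall>(V :: 'a set) E. simple_graph V E \<and> card V = n \<and> N_AW V E l
          \<and> num_edges V E = maxAW n l
          \<longrightarrow> graph_iso V E {0..<n} ?F"
  proof (intro allI impI)
    fix V :: "'a set" and E
    assume h: "simple_graph V E \<and> card V = n \<and> N_AW V E l \<and> num_edges V E = maxAW n l"
    then show "graph_iso V E {0..<n} ?F"
      using bound_and_iso(2)[of V E m l] assms(3) mx n by auto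
  qed
  show ?thesis using mx nd M_simple AWF eF uniq by simp
qed

end
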